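(* Let $2\le r_1<r_2$ be integers, let $T\in\mathfrak{F}(n)$ and let $\lambda=\rho(T)$. Put $\theta=\frac{-\lambda-\sqrt{\lambda^2-4}}{2}$ and $a_2=-\lambda+\frac{1}{\lambda}$. For a real $r\ge 2$ define the sequence $z_1(r)=-\lambda-\frac{r}{a_2}$, $z_{j+1}(r)=-\lambda-\frac{1}{z_j(r)}$ for $j\ge1$. Then: (a) $z_j(r)=\theta+\frac{\theta^{-1}-\theta}{\beta(\theta^2)^j+1}$, where $\beta=\beta(r)=\frac{r-a_2\theta}{a_2\theta-r\theta^2}$; (b) $\beta(r)$ is a continuous function of $r$ on $(2,\infty)\setminus\{r_*\}$, where $r_*=\frac{a_2}{\theta}$; moreover $\beta(r)$ has a single root, at $r^*=a_2\theta$, and $\beta(r)>0$ for $r\in(r_*,r^* )$; (c) for $r\in\{r_1,r_2\}$, the sequence $(z_j(r))_{j\ge1}$ satisfies $z_j(r)<0$ for all $j\ge1$, is decreasing, and $\lim_{j\to\infty}z_j(r)=\theta$.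
   Context: $\rho(G)$ denotes the spectral radius (largest eigenvalue of the adjacency matrix) of a graph $G$. For integers $h,q_1,q_2\ge 2$ and fixed integers $2\le r_1<r_2$, the tree $[h,q_1,q_2]$ is constructed as follows: take a vertex $u$; attach to $u$ a pendant path with $h$ edges; attach to $u$ a path with $q_1$ edges ending at a vertex $v_1$, and attach to $v_1$ exactly $r_1$ pendant paths with $2$ edges each; attach to $u$ a path with $q_2$ edges ending at a vertex $v_2$, and attach to $v_2$ exactly $r_2$ pendant paths with $2$ edges each. It has $n=1+h+q_1+q_2+2(r_1+r_2)$ vertices. $\mathfrak{F}(n)$ is the set of all such trees $[h,q_1,q_2]$ with $h,q_1,q_2\ge2$ and $h+q_1+q_2=n-1-2(r_1+r_2)$. *)

theory Defs
  imports Complex_Main "Jordan_Normal_Form.Char_Poly"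
begin

text \<open>Vertex 0 is u; vertices 1..h form the
  pendant path of h edges; u, h+1, ..., h+q1 is the path of q1 edges ending at
  v1 = h+q1; u, h+q1+1, ..., h+q1+q2 is the path of q2 edges ending at
  v2 = h+q1+q2; the remaining vertices form the r1 (resp. r2) pendant paths
  of 2 edges attached at v1 (resp. v2).\<close>

definition tree_order :: "nat \<Rightarrow> nat \<Rightarrow> nat \<Rightarrow> nat \<Rightarrow> nat \<Rightarrow> nat" where
  "tree_order r1 r2 h q1 q2 = 1 + h + q1 + q2 + 2 * (r1 + r2)"

definition tree_edges :: "nat \<Rightarrow> nat \<Rightarrow> nat \<Rightarrow> nat \<Rightarrow> nat \<Rightarrow> (nat \<times> nat) set" where
  "tree_edges r1 r2 h q1 q2 =
    (let v1 = h + q1; v2 = h + q1 + q2; b1 = h + q1 + q2 + 1; b2 = h + q1 + q2 + 1 + 2 * r1;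
         p1 = (\<lambda>i. if i = 0 then 0 else h + i);
         p2 = (\<lambda>i. if i = 0 then 0 else h + q1 + i)
     in {(i, Suc i) | i. i < h}
      \<union> {(p1 i, p1 (Suc i)) | i. i < q1}
      \<union> {(p2 i, p2 (Suc i)) | i. i < q2}
      \<union> {(v1, b1 + 2 * k) | k. k < r1} \<union> {(b1 + 2 * k, b1 + 2 * k + 1) | k. k < r1}
      \<union> {(v2, b2 + 2 * k) | k. k < r2} \<union> {(b2 + 2 * k, b2 + 2 * k + 1) | k. k < r2})"

definition tree_adj :: "nat \<Rightarrow> nat \<Rightarrow> nat \<Rightarrow> nat \<Rightarrow> nat \<Rightarrow> real mat" where
  "tree_adj r1 r2 h q1 q2 =
    mat (tree_order r1 r2 h q1 q2) (tree_order r1 r2 h q1 q2)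
      (\<lambda>(i, j). if (i, j) \<in> tree_edges r1 r2 h q1 q2 \<or> (j, i) \<in> tree_edges r1 r2 h q1 q2
                then 1 else 0)"

definition largest_eigenvalue :: "real mat \<Rightarrow> real" where
  "largest_eigenvalue A = Max {x. eigenvalue A x}"

text \<open>The sequence z_j(r), indexed from j = 1 (the value at index 0 is unused).\<close>
fun zseq :: "real \<Rightarrow> real \<Rightarrow> real \<Rightarrow> nat \<Rightarrow> real" where
  "zseq lam a2 r 0 = 0"
| "zseq lam a2 r (Suc 0) = - lam - r / a2"
| "zseq lam a2 r (Suc (Suc j)) = - lam - 1 / zseq lam a2 r (Suc j)"

end

theory Submission
  imports Defs
begin


lemma mem1: "(a,b) \<in> {(i, Suc i) | i. i < h} \<longleftrightarrow> a < h \<and> b = a + 1" by auto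

lemma mem2: "(a,b) \<in> {((\<lambda>i. if i = 0 then 0 else h + i) i, (\<lambda>i. if i = 0 then 0 else h + i) (Suc i)) | i. i < (q1::nat)}
   \<longleftrightarrow> (a = 0 \<and> b = h + 1 \<and> 0 < q1) \<or> (h + 1 \<le> a \<and> a < h + q1 \<and> b = a + 1)"
proof
  assume "(a,b) \<in> {((\<lambda>i. if i = 0 then 0 else h + i) i, (\<lambda>i. if i = 0 then 0 else h + i) (Suc i)) | i. i < (q1::nat)}"
  then obtain i where "i < q1" "a = (if i = 0 then 0 else h + i)" "b = h + Suc i" by auto
  then show "(a = 0 \<and> b = h + 1 \<and> 0 < q1) \<or> (h + 1 \<le> a \<and> a < h + q1 \<and> b = a + 1)"
    by (cases "i = 0") auto
next
  assume "(a = 0 \<and> b = h + 1 \<and> 0 < q1) \<or> (h + 1 \<le> a \<and> a < h + q1 \<and> b = a + 1)"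
  then show "(a,b) \<in> {((\<lambda>i. if i = 0 then 0 else h + i) i, (\<lambda>i. if i = 0 then 0 else h + i) (Suc i)) | i. i < (q1::nat)}"
  proof
    assume "a = 0 \<and> b = h + 1 \<and> 0 < q1" then show ?thesis by (auto intro!: exI[of _ 0])
  next
    assume H: "h + 1 \<le> a \<and> a < h + q1 \<and> b = a + 1"
    show ?thesis using H by (auto intro!: exI[of _ "a - h"])
  qed
qed

lemma mem3: "(a,b) \<in> {(v, c + 2 * k) | k. k < (r::nat)} \<longleftrightarrow>
   a = v \<and> c \<le> b \<and> b < c + 2 * r \<and> even (b - c)"
proof
  assume "(a,b) \<in> {(v, c + 2 * k) | k. k < (r::nat)}" then show "a = v \<and> c \<le> b \<and> b < c + 2 * r \<and> even (b - c)" by auto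
next
  assume H: "a = v \<and> c \<le> b \<and> b < c + 2 * r \<and> even (b - c)"
  have "even (b - c)" using H by blast
  then obtain k where "b - c = 2 * k" by (rule evenE)
  then show "(a,b) \<in> {(v, c + 2 * k) | k. k < (r::nat)}" using H by (auto intro!: exI[of _ k])
qed

lemma mem4: "(a,b) \<in> {(c + 2 * k, c + 2 * k + 1) | k. k < (r::nat)} \<longleftrightarrow>
   c \<le> a \<and> a < c + 2 * r \<and> even (a - c) \<and> b = a + 1"
proof
  assume "(a,b) \<in> {(c + 2 * k, c + 2 * k + 1) | k. k < (r::nat)}" then show "c \<le> a \<and> a < c + 2 * r \<and> even (a - c) \<and> b = a + 1" by auto
next
  assume H: "c \<le> a \<and> a < c + 2 * r \<and> even (a - c) \<and> b = a + 1"
  have "even (a - c)" using H by blast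
  then obtain k where "a - c = 2 * k" by (rule evenE)
  then show "(a,b) \<in> {(c + 2 * k, c + 2 * k + 1) | k. k < (r::nat)}" using H by (auto intro!: exI[of _ k])
qed

lemma mem_edges:
  "(a, b) \<in> tree_edges r1 r2 h q1 q2 \<longleftrightarrow>
     (a < h \<and> b = a + 1)
   \<or> ((a = 0 \<and> b = h + 1 \<and> 0 < q1) \<or> (h + 1 \<le> a \<and> a < h + q1 \<and> b = a + 1))
   \<or> ((a = 0 \<and> b = h + q1 + 1 \<and> 0 < q2) \<or> (h + q1 + 1 \<le> a \<and> a < h + q1 + q2 \<and> b = a + 1))
   \<or> (a = h + q1 \<and> h + q1 + q2 + 1 \<le> b \<and> b < h + q1 + q2 + 1 + 2 * r1 \<and> even (b - (h + q1 + q2 + 1)))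
   \<or> (h + q1 + q2 + 1 \<le> a \<and> a < h + q1 + q2 + 1 + 2 * r1 \<and> even (a - (h + q1 + q2 + 1)) \<and> b = a + 1)
   \<or> (a = h + q1 + q2 \<and> h + q1 + q2 + 1 + 2 * r1 \<le> b \<and> b < h + q1 + q2 + 1 + 2 * r1 + 2 * r2
        \<and> even (b - (h + q1 + q2 + 1 + 2 * r1)))
   \<or> (h + q1 + q2 + 1 + 2 * r1 \<le> a \<and> a < h + q1 + q2 + 1 + 2 * r1 + 2 * r2
        \<and> even (a - (h + q1 + q2 + 1 + 2 * r1)) \<and> b = a + 1)"
  unfolding tree_edges_def Let_def Un_iff mem1 mem3 mem4
  unfolding mem2[of a b h q1] mem2[of a b "h+q1" q2] by (simp add: add.assoc)



definition adj where "adj r1 r2 h q1 q2 i j \<longleftrightarrow> (i,j) \<in> tree_edges r1 r2 h q1 q2 \<or> (j,i) \<in> tree_edges r1 r2 h q1 q2"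

context fixes r1 r2 h q1 q2 :: nat
  assumes h2: "2 \<le> h" and q12: "2 \<le> q1" and q22: "2 \<le> q2"
begin

abbreviation "adjE \<equiv> adj r1 r2 h q1 q2"


lemma adj_u: "adjE 0 j \<longleftrightarrow> j = 1 \<or> j = h + 1 \<or> j = h + q1 + 1"
  using h2 q12 q22 unfolding adj_def mem_edges by (intro iffI; (elim disjE conjE)?; (simp; fail)?; presburger)

lemma adj_h: assumes "1 \<le> i" and "i < h" shows "adjE i j \<longleftrightarrow> j + 1 = i \<or> j = i + 1"
  using assms h2 q12 q22 unfolding adj_def mem_edges by (intro iffI; (elim disjE conjE)?; (simp; fail)?; presburger)

lemma adj_hleaf: "adjE h j \<longleftrightarrow> j + 1 = h"
  using h2 q12 q22 unfolding adj_def mem_edges by (intro iffI; (elim disjE conjE)?; (simp; fail)?; presburger)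

lemma adj_q1: assumes "1 \<le> k" and "k < q1" shows "adjE (h + k) j \<longleftrightarrow> (k = 1 \<and> j = 0) \<or> (k \<noteq> 1 \<and> j + 1 = h + k) \<or> j = h + k + 1"
  using assms h2 q12 q22 unfolding adj_def mem_edges by (intro iffI; (elim disjE conjE)?; (simp; fail)?; presburger)

lemma adj_v1: "adjE (h + q1) j \<longleftrightarrow> j + 1 = h + q1 \<or> (h + q1 + q2 + 1 \<le> j \<and> j < h + q1 + q2 + 1 + 2 * r1 \<and> even (j - (h + q1 + q2 + 1)))"
  using h2 q12 q22 unfolding adj_def mem_edges by (intro iffI; (elim disjE conjE)?; (simp; fail)?; presburger)

lemma adj_q2: assumes "1 \<le> k" and "k < q2" shows "adjE (h + q1 + k) j \<longleftrightarrow> (k = 1 \<and> j = 0) \<or> (k \<noteq> 1 \<and> j + 1 = h + q1 + k) \<or> j = h + q1 + k + 1"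
  using assms h2 q12 q22 unfolding adj_def mem_edges by (intro iffI; (elim disjE conjE)?; (simp; fail)?; presburger)

lemma adj_v2: "adjE (h + q1 + q2) j \<longleftrightarrow> j + 1 = h + q1 + q2 \<or> (h + q1 + q2 + 1 + 2 * r1 \<le> j \<and> j < h + q1 + q2 + 1 + 2 * r1 + 2 * r2 \<and> even (j - (h + q1 + q2 + 1 + 2 * r1)))"
  using h2 q12 q22 unfolding adj_def mem_edges by (intro iffI; (elim disjE conjE)?; (simp; fail)?; presburger)

lemma adj_m1: assumes "k < r1" shows "adjE (h + q1 + q2 + 1 + 2 * k) j \<longleftrightarrow> j = h + q1 \<or> j = h + q1 + q2 + 1 + 2 * k + 1"
  using assms h2 q12 q22 unfolding adj_def mem_edges by (intro iffI; (elim disjE conjE)?; (simp; fail)?; presburger)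

lemma adj_l1: assumes "k < r1" shows "adjE (h + q1 + q2 + 1 + 2 * k + 1) j \<longleftrightarrow> j = h + q1 + q2 + 1 + 2 * k"
  using assms h2 q12 q22 unfolding adj_def mem_edges by (intro iffI; (elim disjE conjE)?; (simp; fail)?; presburger)

lemma adj_m2: assumes "k < r2" shows "adjE (h + q1 + q2 + 1 + 2 * r1 + 2 * k) j \<longleftrightarrow> j = h + q1 + q2 \<or> j = h + q1 + q2 + 1 + 2 * r1 + 2 * k + 1"
  using assms h2 q12 q22 unfolding adj_def mem_edges by (intro iffI; (elim disjE conjE)?; (simp; fail)?; presburger)

lemma adj_l2: assumes "k < r2" shows "adjE (h + q1 + q2 + 1 + 2 * r1 + 2 * k + 1) j \<longleftrightarrow> j = h + q1 + q2 + 1 + 2 * r1 + 2 * k"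
  using assms h2 q12 q22 unfolding adj_def mem_edges by (intro iffI; (elim disjE conjE)?; (simp; fail)?; presburger)


lemma eig_tree:
  fixes f :: "nat \<Rightarrow> real"
  defines "n \<equiv> tree_order r1 r2 h q1 q2"
  assumes nbr: "\<And>i. i < n \<Longrightarrow> (\<Sum>j | j < n \<and> adjE i j. f j) = l * f i"
    and nz: "f i0 \<noteq> 0" "i0 < n"
  shows "eigenvalue (tree_adj r1 r2 h q1 q2) l"
proof -
  let ?A = "tree_adj r1 r2 h q1 q2"
  let ?v = "vec n f"
  have A: "?A \<in> carrier_mat n n" unfolding tree_adj_def n_def by simp
  have "?A *\<^sub>v ?v = l \<cdot>\<^sub>v ?v"
  proof (rule eq_vecI)
    fix i assume "i < dim_vec (l \<cdot>\<^sub>v ?v)"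
    then have i: "i < n" by simp
    have "(?A *\<^sub>v ?v) $ i = (\<Sum>j\<in>{0..<n}. ?A $$ (i, j) * f j)"
      using A i by (simp add: scalar_prod_def)
    also have "\<dots> = (\<Sum>j\<in>{0..<n}. (if adjE i j then f j else 0))"
      using i unfolding tree_adj_def n_def adj_def by (intro sum.cong) auto
    also have "\<dots> = (\<Sum>j | j < n \<and> adjE i j. f j)"
      by (subst sum.inter_filter[symmetric]) (auto intro: sum.cong)
    also have "\<dots> = l * f i" using nbr[OF i] .
    finally show "(?A *\<^sub>v ?v) $ i = (l \<cdot>\<^sub>v ?v) $ i" using i by simp
  qed (use A in simp)
  moreover have "?v \<noteq> 0\<^sub>v n" using nz by (metis index_vec index_zero_vec(1))
  ultimately show ?thesis unfolding eigenvalue_def eigenvector_def using A by (intro exI[of _ ?v]) auto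
qed

end


definition fvec :: "nat \<Rightarrow> nat \<Rightarrow> nat \<Rightarrow> nat \<Rightarrow> nat \<Rightarrow> real \<Rightarrow> (nat \<Rightarrow> real) \<Rightarrow> (nat \<Rightarrow> real) \<Rightarrow> (nat \<Rightarrow> real) \<Rightarrow> nat \<Rightarrow> real" where
  "fvec r1 r2 h q1 q2 l H W V i =
    (if i \<le> h then W q1 * V q2 * H (h - i)
     else if i \<le> h + q1 then H h * V q2 * W (q1 - (i - h))
     else if i \<le> h + q1 + q2 then H h * W q1 * V (q2 - (i - h - q1))
     else if i < h + q1 + q2 + 1 + 2 * r1 then
       (if even (i - (h + q1 + q2 + 1)) then H h * V q2 * l else H h * V q2)
     else (if even (i - (h + q1 + q2 + 1 + 2 * r1)) then H h * W q1 * l else H h * W q1))"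

context fixes r1 r2 h q1 q2 :: nat and l :: real and H W V :: "nat \<Rightarrow> real"
  assumes h2: "2 \<le> h" and q12: "2 \<le> q1" and q22: "2 \<le> q2"
    and recH: "\<And>k. H (k + 2) = l * H (k + 1) - H k" and H0: "H 0 = 1" and H1: "H 1 = l"
    and recW: "\<And>k. W (k + 2) = l * W (k + 1) - W k" and W0: "W 0 = l\<^sup>2 - 1" and W1: "W 1 = l * W 0 - r1 * l"
    and recV: "\<And>k. V (k + 2) = l * V (k + 1) - V k" and V0: "V 0 = l\<^sup>2 - 1" and V1: "V 1 = l * V 0 - r2 * l"
begin

abbreviation "fvv \<equiv> fvec r1 r2 h q1 q2 l H W V"
abbreviation "NN \<equiv> tree_order r1 r2 h q1 q2"

lemma f_h: "i \<le> h \<Longrightarrow> fvv i = W q1 * V q2 * H (h - i)"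
  unfolding fvec_def by simp
lemma f_q1: "h < i \<Longrightarrow> i \<le> h + q1 \<Longrightarrow> fvv i = H h * V q2 * W (q1 - (i - h))"
  unfolding fvec_def by simp
lemma f_q2: "h + q1 < i \<Longrightarrow> i \<le> h + q1 + q2 \<Longrightarrow> fvv i = H h * W q1 * V (q2 - (i - h - q1))"
  unfolding fvec_def by simp
lemma f_m1: "k < r1 \<Longrightarrow> fvv (h + q1 + q2 + 1 + 2 * k) = H h * V q2 * l"
  unfolding fvec_def by simp
lemma f_l1: "k < r1 \<Longrightarrow> fvv (h + q1 + q2 + 1 + 2 * k + 1) = H h * V q2"
  unfolding fvec_def by simp
lemma f_m2: "k < r2 \<Longrightarrow> fvv (h + q1 + q2 + 1 + 2 * r1 + 2 * k) = H h * W q1 * l"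
  unfolding fvec_def by simp
lemma f_l2: "k < r2 \<Longrightarrow> fvv (h + q1 + q2 + 1 + 2 * r1 + 2 * k + 1) = H h * W q1"
  unfolding fvec_def by simp

lemma recH': "1 \<le> m \<Longrightarrow> H (m + 1) + H (m - 1) = l * H m"
  using recH[of "m - 1"] by (simp add: Suc_diff_le numeral_2_eq_2)
lemma recW': "1 \<le> m \<Longrightarrow> W (m + 1) + W (m - 1) = l * W m"
  using recW[of "m - 1"] by (simp add: Suc_diff_le numeral_2_eq_2)
lemma recV': "1 \<le> m \<Longrightarrow> V (m + 1) + V (m - 1) = l * V m"
  using recV[of "m - 1"] by (simp add: Suc_diff_le numeral_2_eq_2)

lemma nbr_u: "(\<Sum>j | j < NN \<and> adj r1 r2 h q1 q2 0 j. fvv j) = fvv 1 + fvv (h + 1) + fvv (h + q1 + 1)"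
proof -
  have "{j. j < NN \<and> adj r1 r2 h q1 q2 0 j} = {1, h + 1, h + q1 + 1}"
    using adj_u[OF h2 q12 q22] h2 q12 q22 unfolding tree_order_def by auto
  then show ?thesis using h2 q12 by simp
qed


abbreviation "AD \<equiv> adj r1 r2 h q1 q2"

lemma nbr_h: assumes "1 \<le> i" "i < h" shows "(\<Sum>j | j < NN \<and> AD i j. fvv j) = l * fvv i"
proof -
  have "{j. j < NN \<and> AD i j} = {i - 1, i + 1}"
    using adj_h[OF h2 q12 q22 assms] assms unfolding tree_order_def by auto
  then have "(\<Sum>j | j < NN \<and> AD i j. fvv j) = fvv (i - 1) + fvv (i + 1)" using assms by simp
  also have "\<dots> = W q1 * V q2 * (H (h - i + 1) + H (h - i - 1))"
    using assms by (simp add: f_h algebra_simps Suc_diff_le)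
  also have "\<dots> = l * fvv i" using assms recH'[of "h - i"] by (simp add: f_h)
  finally show ?thesis .
qed

lemma nbr_hleaf: "(\<Sum>j | j < NN \<and> AD h j. fvv j) = l * fvv h"
proof -
  have "{j. j < NN \<and> AD h j} = {h - 1}"
    using adj_hleaf[OF h2 q12 q22] h2 unfolding tree_order_def by auto
  moreover have "H (Suc 0) = l" using H1 by simp
  ultimately show ?thesis using h2 by (simp add: f_h H0)
qed

lemma nbr_q1: assumes "1 \<le> k" "k < q1" shows "(\<Sum>j | j < NN \<and> AD (h + k) j. fvv j) = l * fvv (h + k)"
proof -
  have "{j. j < NN \<and> AD (h + k) j} = {if k = 1 then 0 else h + k - 1, h + k + 1}"
    using adj_q1[OF h2 q12 q22 assms] assms unfolding tree_order_def by auto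
  then have "(\<Sum>j | j < NN \<and> AD (h + k) j. fvv j) = fvv (if k = 1 then 0 else h + k - 1) + fvv (h + k + 1)"
    using assms by simp
  also have "\<dots> = H h * V q2 * (W (q1 - k + 1) + W (q1 - k - 1))"
    using assms by (cases "k = 1") (simp_all add: f_h f_q1 algebra_simps Suc_diff_le)
  also have "\<dots> = l * fvv (h + k)" using assms recW'[of "q1 - k"] by (simp add: f_q1)
  finally show ?thesis .
qed

lemma nbr_q2: assumes "1 \<le> k" "k < q2" shows "(\<Sum>j | j < NN \<and> AD (h + q1 + k) j. fvv j) = l * fvv (h + q1 + k)"
proof -
  have "{j. j < NN \<and> AD (h + q1 + k) j} = {if k = 1 then 0 else h + q1 + k - 1, h + q1 + k + 1}"
    using adj_q2[OF h2 q12 q22 assms] assms unfolding tree_order_def by auto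
  then have "(\<Sum>j | j < NN \<and> AD (h + q1 + k) j. fvv j) = fvv (if k = 1 then 0 else h + q1 + k - 1) + fvv (h + q1 + k + 1)"
    using assms by simp
  also have "\<dots> = H h * W q1 * (V (q2 - k + 1) + V (q2 - k - 1))"
    using assms by (cases "k = 1") (simp_all add: f_h f_q2 algebra_simps Suc_diff_le)
  also have "\<dots> = l * fvv (h + q1 + k)" using assms recV'[of "q2 - k"] by (simp add: f_q2)
  finally show ?thesis .
qed

lemma nbr_m1: assumes "k < r1" shows "(\<Sum>j | j < NN \<and> AD (h + q1 + q2 + 1 + 2 * k) j. fvv j) = l * fvv (h + q1 + q2 + 1 + 2 * k)"
proof -
  have "{j. j < NN \<and> AD (h + q1 + q2 + 1 + 2 * k) j} = {h + q1, h + q1 + q2 + 1 + 2 * k + 1}"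
    using adj_m1[OF h2 q12 q22 assms] assms unfolding tree_order_def by auto
  then have "(\<Sum>j | j < NN \<and> AD (h + q1 + q2 + 1 + 2 * k) j. fvv j) = fvv (h + q1) + fvv (h + q1 + q2 + 1 + 2 * k + 1)" by simp
  also have "\<dots> = l * fvv (h + q1 + q2 + 1 + 2 * k)" unfolding f_m1[OF assms] f_l1[OF assms]
    using h2 q12 by (simp add: f_q1 W0 power2_eq_square algebra_simps)
  finally show ?thesis .
qed

lemma nbr_l1: assumes "k < r1" shows "(\<Sum>j | j < NN \<and> AD (h + q1 + q2 + 1 + 2 * k + 1) j. fvv j) = l * fvv (h + q1 + q2 + 1 + 2 * k + 1)"
proof -
  have "{j. j < NN \<and> AD (h + q1 + q2 + 1 + 2 * k + 1) j} = {h + q1 + q2 + 1 + 2 * k}"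
    using adj_l1[OF h2 q12 q22 assms] assms unfolding tree_order_def by auto
  then have "(\<Sum>j | j < NN \<and> AD (h + q1 + q2 + 1 + 2 * k + 1) j. fvv j) = fvv (h + q1 + q2 + 1 + 2 * k)" by simp
  then show ?thesis unfolding f_m1[OF assms] f_l1[OF assms] by simp
qed

lemma nbr_m2: assumes "k < r2" shows "(\<Sum>j | j < NN \<and> AD (h + q1 + q2 + 1 + 2 * r1 + 2 * k) j. fvv j) = l * fvv (h + q1 + q2 + 1 + 2 * r1 + 2 * k)"
proof -
  have "{j. j < NN \<and> AD (h + q1 + q2 + 1 + 2 * r1 + 2 * k) j} = {h + q1 + q2, h + q1 + q2 + 1 + 2 * r1 + 2 * k + 1}"
    using adj_m2[OF h2 q12 q22 assms] assms unfolding tree_order_def by auto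
  then have "(\<Sum>j | j < NN \<and> AD (h + q1 + q2 + 1 + 2 * r1 + 2 * k) j. fvv j) = fvv (h + q1 + q2) + fvv (h + q1 + q2 + 1 + 2 * r1 + 2 * k + 1)" by simp
  also have "\<dots> = l * fvv (h + q1 + q2 + 1 + 2 * r1 + 2 * k)" unfolding f_m2[OF assms] f_l2[OF assms]
    using h2 q12 q22 by (simp add: f_q2 V0 power2_eq_square algebra_simps)
  finally show ?thesis .
qed

lemma nbr_l2: assumes "k < r2" shows "(\<Sum>j | j < NN \<and> AD (h + q1 + q2 + 1 + 2 * r1 + 2 * k + 1) j. fvv j) = l * fvv (h + q1 + q2 + 1 + 2 * r1 + 2 * k + 1)"
proof -
  have "{j. j < NN \<and> AD (h + q1 + q2 + 1 + 2 * r1 + 2 * k + 1) j} = {h + q1 + q2 + 1 + 2 * r1 + 2 * k}"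
    using adj_l2[OF h2 q12 q22 assms] assms unfolding tree_order_def by auto
  then have "(\<Sum>j | j < NN \<and> AD (h + q1 + q2 + 1 + 2 * r1 + 2 * k + 1) j. fvv j) = fvv (h + q1 + q2 + 1 + 2 * r1 + 2 * k)" by simp
  then show ?thesis unfolding f_m2[OF assms] f_l2[OF assms] by simp
qed

lemma nbr_v1: "(\<Sum>j | j < NN \<and> AD (h + q1) j. fvv j) = l * fvv (h + q1)"
proof -
  have "{j. j < NN \<and> AD (h + q1) j} = insert (h + q1 - 1) ((\<lambda>k. h + q1 + q2 + 1 + 2 * k) ` {..<r1})"
  proof (intro equalityI subsetI)
    fix j assume "j \<in> {j. j < NN \<and> AD (h + q1) j}"
    then have "j + 1 = h + q1 \<or> (h + q1 + q2 + 1 \<le> j \<and> j < h + q1 + q2 + 1 + 2 * r1 \<and> even (j - (h + q1 + q2 + 1)))"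
      using adj_v1[OF h2 q12 q22] by auto
    then show "j \<in> insert (h + q1 - 1) ((\<lambda>k. h + q1 + q2 + 1 + 2 * k) ` {..<r1})"
    proof
      assume "j + 1 = h + q1" then show ?thesis by auto
    next
      assume a: "h + q1 + q2 + 1 \<le> j \<and> j < h + q1 + q2 + 1 + 2 * r1 \<and> even (j - (h + q1 + q2 + 1))"
      have "even (j - (h + q1 + q2 + 1))" using a by blast
      then obtain k where k: "j - (h + q1 + q2 + 1) = 2 * k" by (rule evenE)
      then have "j = h + q1 + q2 + 1 + 2 * k" "k < r1" using a by auto
      then show ?thesis by auto
    qed
  next
    fix j assume "j \<in> insert (h + q1 - 1) ((\<lambda>k. h + q1 + q2 + 1 + 2 * k) ` {..<r1})"
    then show "j \<in> {j. j < NN \<and> AD (h + q1) j}"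
      using adj_v1[OF h2 q12 q22] h2 q12 unfolding tree_order_def by auto
  qed
  moreover have "h + q1 - 1 \<notin> (\<lambda>k. h + q1 + q2 + 1 + 2 * k) ` {..<r1}" by auto
  moreover have "inj_on (\<lambda>k. h + q1 + q2 + 1 + 2 * k) {..<r1}" by (auto simp: inj_on_def)
  ultimately have "(\<Sum>j | j < NN \<and> AD (h + q1) j. fvv j) = fvv (h + q1 - 1) + (\<Sum>k<r1. fvv (h + q1 + q2 + 1 + 2 * k))"
    by (simp add: sum.reindex)
  also have "(\<Sum>k<r1. fvv (h + q1 + q2 + 1 + 2 * k)) = (\<Sum>k<r1. H h * V q2 * l)"
    by (intro sum.cong refl) (rule f_m1, simp)
  also have "fvv (h + q1 - 1) + (\<Sum>k<r1. H h * V q2 * l) = H h * V q2 * W 1 + r1 * (H h * V q2 * l)"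
    using h2 q12 by (simp add: f_q1)
  also have "\<dots> = H h * V q2 * (l * W 0)" unfolding W1 by (simp add: algebra_simps)
  also have "\<dots> = l * fvv (h + q1)" using q12 by (simp add: f_q1)
  finally show ?thesis .
qed

lemma nbr_v2: "(\<Sum>j | j < NN \<and> AD (h + q1 + q2) j. fvv j) = l * fvv (h + q1 + q2)"
proof -
  have "{j. j < NN \<and> AD (h + q1 + q2) j} = insert (h + q1 + q2 - 1) ((\<lambda>k. h + q1 + q2 + 1 + 2 * r1 + 2 * k) ` {..<r2})"
  proof (intro equalityI subsetI)
    fix j assume "j \<in> {j. j < NN \<and> AD (h + q1 + q2) j}"
    then have "j + 1 = h + q1 + q2 \<or> (h + q1 + q2 + 1 + 2 * r1 \<le> j \<and> j < h + q1 + q2 + 1 + 2 * r1 + 2 * r2 \<and> even (j - (h + q1 + q2 + 1 + 2 * r1)))"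
      using adj_v2[OF h2 q12 q22] by auto
    then show "j \<in> insert (h + q1 + q2 - 1) ((\<lambda>k. h + q1 + q2 + 1 + 2 * r1 + 2 * k) ` {..<r2})"
    proof
      assume "j + 1 = h + q1 + q2" then show ?thesis by auto
    next
      assume a: "h + q1 + q2 + 1 + 2 * r1 \<le> j \<and> j < h + q1 + q2 + 1 + 2 * r1 + 2 * r2 \<and> even (j - (h + q1 + q2 + 1 + 2 * r1))"
      have "even (j - (h + q1 + q2 + 1 + 2 * r1))" using a by blast
      then obtain k where k: "j - (h + q1 + q2 + 1 + 2 * r1) = 2 * k" by (rule evenE)
      then have "j = h + q1 + q2 + 1 + 2 * r1 + 2 * k" "k < r2" using a by auto
      then show ?thesis by auto
    qed
  next
    fix j assume "j \<in> insert (h + q1 + q2 - 1) ((\<lambda>k. h + q1 + q2 + 1 + 2 * r1 + 2 * k) ` {..<r2})"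
    then show "j \<in> {j. j < NN \<and> AD (h + q1 + q2) j}"
      using adj_v2[OF h2 q12 q22] h2 q12 q22 unfolding tree_order_def by auto
  qed
  moreover have "h + q1 + q2 - 1 \<notin> (\<lambda>k. h + q1 + q2 + 1 + 2 * r1 + 2 * k) ` {..<r2}" by auto
  moreover have "inj_on (\<lambda>k. h + q1 + q2 + 1 + 2 * r1 + 2 * k) {..<r2}" by (auto simp: inj_on_def)
  ultimately have "(\<Sum>j | j < NN \<and> AD (h + q1 + q2) j. fvv j) = fvv (h + q1 + q2 - 1) + (\<Sum>k<r2. fvv (h + q1 + q2 + 1 + 2 * r1 + 2 * k))"
    by (simp add: sum.reindex)
  also have "(\<Sum>k<r2. fvv (h + q1 + q2 + 1 + 2 * r1 + 2 * k)) = (\<Sum>k<r2. H h * W q1 * l)"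
    by (intro sum.cong refl) (rule f_m2, simp)
  also have "fvv (h + q1 + q2 - 1) + (\<Sum>k<r2. H h * W q1 * l) = H h * W q1 * V 1 + r2 * (H h * W q1 * l)"
    using h2 q12 q22 by (simp add: f_q2)
  also have "\<dots> = H h * W q1 * (l * V 0)" unfolding V1 by (simp add: algebra_simps)
  also have "\<dots> = l * fvv (h + q1 + q2)" using q22 by (simp add: f_q2)
  finally show ?thesis .
qed


lemma tree_eigen:
  assumes defect: "W q1 * V q2 * H (h - 1) + H h * V q2 * W (q1 - 1) + H h * W q1 * V (q2 - 1) = l * (H h * W q1 * V q2)"
    and nz: "W q1 * V q2 \<noteq> 0"
  shows "eigenvalue (tree_adj r1 r2 h q1 q2) l"
proof (rule eig_tree[OF h2 q12 q22, where f = fvv and l = l and ?i0.0 = h])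
  show "fvv h \<noteq> 0" using nz by (simp add: f_h H0)
  show "h < NN" unfolding tree_order_def by simp
next
  fix i assume i: "i < NN"
  consider "i = 0" | "1 \<le> i \<and> i < h" | "i = h" | "h < i \<and> i < h + q1" | "i = h + q1"
    | "h + q1 < i \<and> i < h + q1 + q2" | "i = h + q1 + q2"
    | "h + q1 + q2 < i \<and> i < h + q1 + q2 + 1 + 2 * r1"
    | "h + q1 + q2 + 1 + 2 * r1 \<le> i" by linarith
  then show "(\<Sum>j | j < NN \<and> AD i j. fvv j) = l * fvv i"
  proof cases
    case 1
    have "fvv 1 + fvv (h + 1) + fvv (h + q1 + 1) = W q1 * V q2 * H (h - 1) + H h * V q2 * W (q1 - 1) + H h * W q1 * V (q2 - 1)"
      using h2 q12 q22 by (simp add: f_h f_q1 f_q2)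
    also have "\<dots> = l * fvv 0" using defect by (simp add: f_h)
    finally show ?thesis using nbr_u 1 by simp
  next
    case 2 then show ?thesis using nbr_h by auto
  next
    case 3 then show ?thesis using nbr_hleaf by simp
  next
    case 4
    then have "1 \<le> i - h" "i - h < q1" "i = h + (i - h)" by auto
    then show ?thesis using nbr_q1[of "i - h"] by metis
  next
    case 5 then show ?thesis using nbr_v1 by simp
  next
    case 6
    then have "1 \<le> i - h - q1" "i - h - q1 < q2" "i = h + q1 + (i - h - q1)" by auto
    then show ?thesis using nbr_q2[of "i - h - q1"] by metis
  next
    case 7 then show ?thesis using nbr_v2 by simp
  next
    case 8
    define k where "k = (i - (h + q1 + q2 + 1)) div 2"
    have k: "k < r1" using 8 unfolding k_def by auto
    show ?thesis
    proof (cases "even (i - (h + q1 + q2 + 1))")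
      case True
      then have "i = h + q1 + q2 + 1 + 2 * k" using 8 unfolding k_def by auto
      then show ?thesis using nbr_m1[OF k] by simp
    next
      case False
      then have "i = h + q1 + q2 + 1 + 2 * k + 1" using 8 unfolding k_def by presburger
      then show ?thesis using nbr_l1[OF k] by simp
    qed
  next
    case 9
    define k where "k = (i - (h + q1 + q2 + 1 + 2 * r1)) div 2"
    have k: "k < r2" using 9 i unfolding k_def tree_order_def by auto
    show ?thesis
    proof (cases "even (i - (h + q1 + q2 + 1 + 2 * r1))")
      case True
      then have "i = h + q1 + q2 + 1 + 2 * r1 + 2 * k" using 9 unfolding k_def by auto
      then show ?thesis using nbr_m2[OF k] by simp
    next
      case False
      then have "i = h + q1 + q2 + 1 + 2 * r1 + 2 * k + 1" using 9 unfolding k_def by presburger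
      then show ?thesis using nbr_l2[OF k] by simp
    qed
  qed
qed

end
lemma sq_gt1: fixes t :: real assumes "t < -1" shows "t\<^sup>2 > 1"
proof -
  have "1 < -t" using assms by simp
  then have "1 * 1 < (-t) * (-t)" by (intro mult_strict_mono) auto
  then show ?thesis by (simp add: power2_eq_square)
qed

lemma mob: fixes t E :: real
  assumes "t \<noteq> 0" "t\<^sup>2 \<noteq> 1" "E + 1 \<noteq> 0" "t * (E + 1) + inverse t - t \<noteq> 0" "E * t\<^sup>2 + 1 \<noteq> 0"
  shows "- (- (t + 1 / t)) - 1 / ((t * (E + 1) + inverse t - t) / (E + 1)) = t + (inverse t - t) / (E * t\<^sup>2 + 1)"
proof -
  have N: "t * (E + 1) + inverse t - t = (E * t\<^sup>2 + 1) / t" using assms(1)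
    by (simp add: field_simps power2_eq_square)
  have "1 / ((t * (E + 1) + inverse t - t) / (E + 1)) = (E + 1) * t / (E * t\<^sup>2 + 1)"
    unfolding N using assms by simp
  define D where "D = E * t\<^sup>2 + 1"
  have D0: "D \<noteq> 0" using assms D_def by simp
  have k: "D / t - (E + 1) * t = 1 / t - t" unfolding D_def using assms(1)
    by (simp add: field_simps power2_eq_square)
  have "(inverse t - t) / D = (D / t - (E + 1) * t) / D" using k by (simp add: inverse_eq_divide)
  also have "\<dots> = 1 / t - (E + 1) * t / D" using D0 assms(1) by (simp add: diff_divide_distrib)
  finally have k2: "(inverse t - t) / D = 1 / t - (E + 1) * t / D" .
  have "- (- (t + 1 / t)) - 1 / ((t * (E + 1) + inverse t - t) / (E + 1)) = t + (1 / t - (E + 1) * t / D)"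
    unfolding \<open>1 / ((t * (E + 1) + inverse t - t) / (E + 1)) = (E + 1) * t / (E * t\<^sup>2 + 1)\<close> D_def by simp
  then show ?thesis using k2 unfolding D_def by simp
qed

lemma zformula:
  fixes t lam a2 r :: real
  assumes t: "t < -1" and lam: "lam = - (t + 1 / t)" and a2: "a2 \<noteq> 0"
    and rne: "a2 * t - r * t\<^sup>2 \<noteq> 0"
  defines "B \<equiv> (r - a2 * t) / (a2 * t - r * t\<^sup>2)"
  shows "j \<ge> 1 \<Longrightarrow> (\<forall>i. 1 \<le> i \<and> i < j \<longrightarrow> zseq lam a2 r i \<noteq> 0) \<Longrightarrow>
     B * (t\<^sup>2) ^ j + 1 \<noteq> 0 \<and> zseq lam a2 r j = t + (inverse t - t) / (B * (t\<^sup>2) ^ j + 1)"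
proof (induction j rule: nat_induct_at_least)
  case base
  have t0: "t \<noteq> 0" "1 - t\<^sup>2 \<noteq> 0" using t sq_gt1[OF t] by auto
  have ne: "a2 - r * t \<noteq> 0" using rne t0 by (auto simp: power2_eq_square algebra_simps)
  have D: "B * t\<^sup>2 + 1 = a2 * (1 - t\<^sup>2) / (a2 - r * t)"
    unfolding B_def using rne t0 ne
    by (simp add: field_simps power2_eq_square, (simp add: algebra_simps)?)
  have "B * t\<^sup>2 + 1 \<noteq> 0" unfolding D using a2 t0 ne by simp
  moreover have "zseq lam a2 r 1 = t + (inverse t - t) / (B * t\<^sup>2 + 1)"
    unfolding D lam using a2 t0 ne
    by (simp add: field_simps power2_eq_square, (simp add: algebra_simps)?)
  ultimately show ?case by simp
next
  case (Suc j)
  have t0: "t \<noteq> 0" "1 - t\<^sup>2 \<noteq> 0" using t sq_gt1[OF t] by auto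
  from Suc.prems have zj: "zseq lam a2 r j \<noteq> 0" using Suc.hyps by auto
  from Suc.IH Suc.prems have IH: "B * (t\<^sup>2) ^ j + 1 \<noteq> 0"
      "zseq lam a2 r j = t + (inverse t - t) / (B * (t\<^sup>2) ^ j + 1)" by auto
  define E where "E = B * (t\<^sup>2) ^ j"
  have E1: "E + 1 \<noteq> 0" using IH E_def by simp
  have zE: "zseq lam a2 r j = (t * (E + 1) + inverse t - t) / (E + 1)"
    using IH(2) E1 unfolding E_def[symmetric] by (simp add: field_simps)
  have num: "t * (E + 1) + inverse t - t \<noteq> 0" using zj zE by auto
  have EE: "B * (t\<^sup>2) ^ Suc j + 1 = E * t\<^sup>2 + 1" unfolding E_def by (simp add: algebra_simps)
  have D2: "E * t\<^sup>2 + 1 \<noteq> 0"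
  proof
    assume "E * t\<^sup>2 + 1 = 0"
    then have "E = - 1 / t\<^sup>2" using t0 by (simp add: field_simps)
    then have "t * (E + 1) + inverse t - t = 0" using t0
      by (simp add: field_simps power2_eq_square)
    then show False using num by simp
  qed
  obtain m where jm: "j = Suc m" using Suc.hyps by (cases j) auto
  have "zseq lam a2 r (Suc j) = - lam - 1 / zseq lam a2 r j"
    unfolding jm by simp
  also have "\<dots> = - lam - 1 / ((t * (E + 1) + inverse t - t) / (E + 1))" by (simp only: zE)
  also have "\<dots> = t + (inverse t - t) / (E * t\<^sup>2 + 1)"
    unfolding lam by (rule mob[OF t0(1) _ E1 num D2]) (use t0 in simp)
  finally show ?case unfolding EE using D2 by simp
qed



fun gs :: "real \<Rightarrow> real \<Rightarrow> real \<Rightarrow> nat \<Rightarrow> real" where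
  "gs l a b 0 = a"
| "gs l a b (Suc 0) = b"
| "gs l a b (Suc (Suc k)) = l * gs l a b (Suc k) - gs l a b k"

lemma gs_rec: "gs l a b (k + 2) = l * gs l a b (k + 1) - gs l a b k"
  by (simp add: numeral_2_eq_2)

lemma gs_inv:
  assumes p: "p > 0" "p + 1 / p \<le> l" and a: "0 < a" "a \<le> p * b"
  shows "0 < gs l a b k \<and> gs l a b k \<le> p * gs l a b (Suc k)"
proof (induction k)
  case 0 then show ?case using a by simp
next
  case (Suc k)
  let ?x = "gs l a b k" and ?y = "gs l a b (Suc k)"
  have x: "0 < ?x" "?x \<le> p * ?y" using Suc by auto
  have "0 < p * ?y" using x by linarith
  then have y: "0 < ?y" using p zero_less_mult_pos by blast
  have "p * (p + 1 / p) \<le> p * l" using p by (intro mult_left_mono) auto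
  moreover have "p * (p + 1 / p) = p * p + 1" using p by (simp add: field_simps)
  ultimately have pl: "1 \<le> p * (l - p)" by (simp add: algebra_simps)
  have "gs l a b (Suc (Suc k)) = l * ?y - ?x" by simp
  moreover have "?y \<le> p * (l * ?y - ?x)"
  proof -
    have "?y \<le> p * (l - p) * ?y" using pl y by simp
    also have "\<dots> = p * (l * ?y - p * ?y)" by (simp add: algebra_simps)
    also have "\<dots> \<le> p * (l * ?y - ?x)" using x p by (intro mult_left_mono) auto
    finally show ?thesis .
  qed
  ultimately show ?case using y by simp
qed

lemma gs_eq:
  assumes p: "p \<noteq> 0" "p + 1 / p = l" and a: "a = p * b"
  shows "gs l a b k = p * gs l a b (Suc k)"
proof (induction k)
  case 0 then show ?case using a by simp
next
  case (Suc k)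
  have "p * gs l a b (Suc (Suc k)) = p * (l * gs l a b (Suc k) - p * gs l a b (Suc k))" using Suc by simp
  also have "\<dots> = (p * l - p * p) * gs l a b (Suc k)" by (simp add: algebra_simps)
  also have "p * l - p * p = 1" using p by (simp add: field_simps)
  also have "1 * gs l a b (Suc k) = gs l a b (Suc k)" by simp
  finally show ?case by simp
qed

lemma gs_cont:
  assumes "continuous_on S L" "continuous_on S A" "continuous_on S B"
  shows "continuous_on S (\<lambda>q. gs (L q) (A q) (B q) k) \<and> continuous_on S (\<lambda>q. gs (L q) (A q) (B q) (Suc k))"
proof (induction k)
  case 0 then show ?case using assms by simp
next
  case (Suc k)
  then show ?case using assms by (auto intro!: continuous_intros)
qed

lemma Rq: fixes q :: real assumes "q > 0"
  shows "q * ((q + 1 / q)\<^sup>2 - 1) / (q + 1 / q) = q\<^sup>2 + 1 / (q\<^sup>2 + 1)"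
proof -
  have "q\<^sup>2 + 1 > 0" by (smt (verit) zero_le_power2)
  moreover have "q * q + q * (q * (q * q)) > 0" using assms by (simp add: add_pos_pos)
  moreover have "q * q + q * q * q * q > 0" using assms by (simp add: add_pos_pos)
  ultimately show ?thesis using assms by (simp add: field_simps power2_eq_square, (simp add: algebra_simps)?)
qed

lemma R_mono: fixes s t :: real assumes "0 \<le> s" "s \<le> t"
  shows "s + 1 / (s + 1) \<le> t + 1 / (t + 1)"
proof -
  have "1 / (s + 1) - 1 / (t + 1) = (t - s) / ((s + 1) * (t + 1))" using assms by (simp add: field_simps)
  also have "\<dots> \<le> (t - s) / 1" using assms
    by (intro divide_left_mono) (auto simp: algebra_simps intro!: add_pos_nonneg mult_nonneg_nonneg)
  finally show ?thesis by simp
qed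


lemma L_facts: fixes q L :: real assumes "q > 1" "L = q + 1 / q"
  shows "q * (L - q) = 1" "L > q" "L > 1" "L\<^sup>2 - 1 > 0" "L < 2 * q" "L \<ge> 2"
proof -
  show "q * (L - q) = 1" using assms by (simp add: field_simps)
  have "1 / q > 0" using assms by simp
  then show "L > q" using assms by linarith
  then show L1: "L > 1" using assms by linarith
  have "1 * 1 < L * L" using L1 by (intro mult_strict_mono) auto
  then show "L\<^sup>2 - 1 > 0" by (simp add: power2_eq_square)
  have "1 / q < 1" using assms by simp
  then show "L < 2 * q" using assms by linarith
  have "(q - 1)\<^sup>2 \<ge> 0" by simp
  then have "q * q + 1 \<ge> 2 * q" by (simp add: power2_eq_square algebra_simps)
  then have "(q * q + 1) / q \<ge> 2" using assms by (simp add: field_simps)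
  moreover have "(q * q + 1) / q = L" using assms by (simp add: field_simps)
  ultimately show "L \<ge> 2" by simp
qed

lemma pos_branch: fixes L q r :: real
  assumes q: "q > 1" "L = q + 1 / q" and r: "r * L \<le> q * (L\<^sup>2 - 1)"
  shows "0 < gs L (L\<^sup>2 - 1) (L * (L\<^sup>2 - 1) - r * L) k \<and>
         gs L (L\<^sup>2 - 1) (L * (L\<^sup>2 - 1) - r * L) k \<le> q * gs L (L\<^sup>2 - 1) (L * (L\<^sup>2 - 1) - r * L) (Suc k)"
proof (rule gs_inv)
  note F = L_facts[OF q]
  show "0 < q" "q + 1 / q \<le> L" using q by auto
  show "0 < L\<^sup>2 - 1" using F by simp
  have "q * (r * L) \<le> q * (q * (L\<^sup>2 - 1))" using r q by (intro mult_left_mono) auto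
  then have "q * (L * (L\<^sup>2 - 1) - r * L) \<ge> q * L * (L\<^sup>2 - 1) - q * q * (L\<^sup>2 - 1)"
    by (simp add: algebra_simps)
  moreover have "q * L * (L\<^sup>2 - 1) - q * q * (L\<^sup>2 - 1) = q * (L - q) * (L\<^sup>2 - 1)" by (simp add: algebra_simps)
  ultimately show "L\<^sup>2 - 1 \<le> q * (L * (L\<^sup>2 - 1) - r * L)" using F by simp
qed

lemma pos_H: fixes L q :: real
  assumes q: "q > 1" "L = q + 1 / q"
  shows "0 < gs L 1 L k \<and> gs L 1 L k \<le> q * gs L 1 L (Suc k)"
proof (rule gs_inv)
  show "0 < q" "q + 1 / q \<le> L" using q by auto
  show "(0::real) < 1" by simp
  show "1 \<le> q * L" using q by (simp add: field_simps)
qed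

lemma gs_le_step: assumes "\<And>k. 0 < gs L a b k" "1 \<le> m"
  shows "gs L a b (Suc m) \<le> L * gs L a b m"
proof -
  obtain j where m: "m = Suc j" using assms(2) by (cases m) auto
  show ?thesis using assms(1)[of j] unfolding m by simp
qed


lemma exists_q:
  fixes r1 r2 q0 :: real and h q1 q2 :: nat
  assumes r: "0 \<le> r1" "r1 < r2" and q0: "1 < q0" "q0\<^sup>2 + 1 / (q0\<^sup>2 + 1) = r2"
    and hq: "2 \<le> h" "2 \<le> q1" "2 \<le> q2"
  defines "Lf \<equiv> (\<lambda>q::real. q + 1 / q)"
  defines "Hf \<equiv> (\<lambda>q. gs (Lf q) 1 (Lf q))"
    and "Wf \<equiv> (\<lambda>q. gs (Lf q) ((Lf q)\<^sup>2 - 1) (Lf q * ((Lf q)\<^sup>2 - 1) - r1 * Lf q))"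
    and "Vf \<equiv> (\<lambda>q. gs (Lf q) ((Lf q)\<^sup>2 - 1) (Lf q * ((Lf q)\<^sup>2 - 1) - r2 * Lf q))"
  defines "g \<equiv> (\<lambda>q. Wf q q1 * Vf q q2 * Hf q (h - 1) + Hf q h * Vf q q2 * Wf q (q1 - 1)
                     + Hf q h * Wf q q1 * Vf q (q2 - 1) - Lf q * (Hf q h * Wf q q1 * Vf q q2))"
  shows "\<exists>q. q0 < q \<and> g q = 0 \<and> Wf q q1 * Vf q q2 \<noteq> 0"
proof -
  define Q where "Q = r2 + 2"
  have q0sq: "q0\<^sup>2 > 1" using q0 by (simp add: one_less_power)
  have "q0\<^sup>2 + 1 > 0" by (smt (verit) zero_le_power2)
  then have "1 / (q0\<^sup>2 + 1) > 0" by simp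
  then have r2pos: "r2 > q0\<^sup>2" using q0 by linarith
  have "q0 * 1 < q0 * q0" using q0 by (intro mult_strict_left_mono) auto
  then have q0Q: "q0 < Q" unfolding Q_def using r2pos q0 unfolding power2_eq_square by linarith
  have cond: "ri * Lf q \<le> q * ((Lf q)\<^sup>2 - 1)" if "q0 \<le> q" "ri \<le> r2" for q ri :: real
  proof -
    have qp: "q > 0" using that q0 by simp
    have "r2 \<le> q\<^sup>2 + 1 / (q\<^sup>2 + 1)" unfolding q0(2)[symmetric]
      using that q0 by (intro R_mono) (auto intro!: power_mono)
    also have "\<dots> = q * ((Lf q)\<^sup>2 - 1) / Lf q" unfolding Lf_def using Rq[OF qp] by simp
    finally have "ri \<le> q * ((Lf q)\<^sup>2 - 1) / Lf q" using that by simp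
    moreover have "Lf q > 0" unfolding Lf_def using qp by (intro add_pos_pos) auto
    ultimately show ?thesis by (simp add: pos_le_divide_eq)
  qed
  have Hpos: "0 < Hf q k \<and> Hf q k \<le> q * Hf q (Suc k)" if "q0 \<le> q" for q k
    unfolding Hf_def using that q0 by (intro pos_H) (auto simp: Lf_def)
  have Wpos: "0 < Wf q k \<and> Wf q k \<le> q * Wf q (Suc k)" if "q0 \<le> q" for q k
    unfolding Wf_def using that q0 r cond[OF that, of r1] by (intro pos_branch) (auto simp: Lf_def)
  have Vpos: "0 < Vf q k \<and> Vf q k \<le> q * Vf q (Suc k)" if "q0 \<le> q" for q k
    unfolding Vf_def using that q0 r cond[OF that, of r2] by (intro pos_branch) (auto simp: Lf_def)
  have g0: "g q0 > 0"
  proof -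
    let ?L = "Lf q0"
    have F: "q0 * (?L - q0) = 1" "?L > q0" "?L > 1" "?L\<^sup>2 - 1 > 0" "?L < 2 * q0"
      using L_facts[OF q0(1)] unfolding Lf_def by auto
    have eqc: "r2 * ?L = q0 * (?L\<^sup>2 - 1)"
    proof -
      have "r2 = q0 * (?L\<^sup>2 - 1) / ?L" unfolding q0(2)[symmetric] Lf_def using Rq q0 by simp
      then show ?thesis using F by (simp add: field_simps)
    qed
    have Veq: "Vf q0 k = q0 * Vf q0 (Suc k)" for k
      unfolding Vf_def
    proof (rule gs_eq)
      show "q0 \<noteq> 0" "q0 + 1 / q0 = ?L" using q0 by (auto simp: Lf_def)
      have "q0 * (?L * (?L\<^sup>2 - 1) - r2 * ?L) = q0 * ?L * (?L\<^sup>2 - 1) - q0 * (r2 * ?L)"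
        by (simp add: algebra_simps)
      also have "\<dots> = q0 * ?L * (?L\<^sup>2 - 1) - q0 * (q0 * (?L\<^sup>2 - 1))" by (simp only: eqc)
      also have "\<dots> = q0 * (?L - q0) * (?L\<^sup>2 - 1)" by (simp add: algebra_simps)
      finally show "?L\<^sup>2 - 1 = q0 * (?L * (?L\<^sup>2 - 1) - r2 * ?L)" using F by simp
    qed
    have V1: "Vf q0 (q2 - 1) = q0 * Vf q0 q2" using Veq[of "q2 - 1"] hq by simp
    have H1: "Hf q0 h \<le> ?L * Hf q0 (h - 1)"
      using gs_le_step[of ?L 1 ?L "h - 1"] Hpos[of q0] hq unfolding Hf_def by simp
    have W1: "Wf q0 q1 \<le> ?L * Wf q0 (q1 - 1)"
      using gs_le_step[of ?L "?L\<^sup>2 - 1" "?L * (?L\<^sup>2 - 1) - r1 * ?L" "q1 - 1"] Wpos[of q0] hq unfolding Wf_def by simp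
    define P where "P = Hf q0 h * Wf q0 q1 * Vf q0 q2"
    have hp: "Hf q0 h > 0" "Wf q0 q1 > 0" "Vf q0 q2 > 0" using Hpos Wpos Vpos by auto
    then have P: "P > 0" unfolding P_def by simp
    have "?L * g q0 = Wf q0 q1 * Vf q0 q2 * (?L * Hf q0 (h - 1)) + Hf q0 h * Vf q0 q2 * (?L * Wf q0 (q1 - 1))
        + (q0 - ?L) * ?L * P"
      unfolding g_def P_def V1 by (simp add: algebra_simps)
    also have "\<dots> \<ge> Wf q0 q1 * Vf q0 q2 * Hf q0 h + Hf q0 h * Vf q0 q2 * Wf q0 q1 + (q0 - ?L) * ?L * P"
      using H1 W1 hp by (intro add_mono order_refl mult_left_mono) auto
    finally have "?L * g q0 \<ge> P * (2 - (?L - q0) * ?L)" unfolding P_def by (simp add: algebra_simps)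
    moreover have "(?L - q0) * ?L < 2"
    proof -
      have "?L - q0 = 1 / q0" using F q0 by (simp add: field_simps)
      then have "(?L - q0) * ?L = ?L / q0" by simp
      also have "\<dots> < 2" using F q0 by (simp add: divide_less_eq)
      finally show ?thesis .
    qed
    moreover have "P * (2 - (?L - q0) * ?L) > 0" using P calculation(2) by (intro mult_pos_pos) auto
    ultimately have "?L * g q0 > 0" by linarith
    then show ?thesis using F zero_less_mult_pos[of ?L "g q0"] by linarith
  qed
  have gQ: "g Q < 0"
  proof -
    let ?L = "Lf Q"
    have Q1: "Q > 1" unfolding Q_def using r q0 r2pos by simp
    have F: "?L > Q" "?L \<ge> 2" using L_facts[OF Q1] unfolding Lf_def by auto
    have L3: "?L > 3" "?L - 1 \<ge> r2" using F unfolding Q_def using r2pos q0sq by auto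
    have LL: "?L\<^sup>2 - 1 \<ge> ?L"
    proof -
      have "?L * ?L \<ge> 2 * ?L" using F by (intro mult_right_mono) auto
      then have "?L * ?L - 1 \<ge> ?L" using F by linarith
      then show ?thesis by (simp add: power2_eq_square)
    qed
    have mono1: "0 < gs ?L a b k \<and> gs ?L a b k \<le> 1 * gs ?L a b (Suc k)" if "0 < a" "a \<le> 1 * b" for a b k
      using that F by (intro gs_inv) auto
    have brc: "?L\<^sup>2 - 1 \<le> 1 * (?L * (?L\<^sup>2 - 1) - ri * ?L)" if "0 \<le> ri" "ri \<le> r2" for ri
    proof -
      have "ri * ?L \<le> (?L - 1) * ?L" using that L3 F by (intro mult_right_mono) auto
      also have "\<dots> \<le> (?L - 1) * (?L\<^sup>2 - 1)" using LL L3 F by (intro mult_left_mono) auto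
      finally show ?thesis by (simp add: algebra_simps)
    qed
    have L2: "?L\<^sup>2 - 1 > 0" using LL F by simp
    have Hm: "0 < Hf Q k \<and> Hf Q k \<le> Hf Q (Suc k)" for k
      using mono1[of 1 ?L k] F unfolding Hf_def by simp
    have Wm: "0 < Wf Q k \<and> Wf Q k \<le> Wf Q (Suc k)" for k
      using mono1[OF L2 brc[of r1], of k] r unfolding Wf_def by simp
    have Vm: "0 < Vf Q k \<and> Vf Q k \<le> Vf Q (Suc k)" for k
      using mono1[OF L2 brc[of r2], of k] r unfolding Vf_def by simp
    have a: "Hf Q (h - 1) \<le> Hf Q h" "Wf Q (q1 - 1) \<le> Wf Q q1" "Vf Q (q2 - 1) \<le> Vf Q q2"
      using Hm[of "h - 1"] Wm[of "q1 - 1"] Vm[of "q2 - 1"] hq by auto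
    define P where "P = Hf Q h * Wf Q q1 * Vf Q q2"
    have hp: "Hf Q h > 0" "Wf Q q1 > 0" "Vf Q q2 > 0" using Hm Wm Vm by auto
    have t1: "Wf Q q1 * Vf Q q2 * Hf Q (h - 1) \<le> P" unfolding P_def using a hp
      by (metis mult.commute mult.left_commute mult_left_mono less_imp_le mult_pos_pos)
    have t2: "Hf Q h * Vf Q q2 * Wf Q (q1 - 1) \<le> P" unfolding P_def using a hp
      by (metis mult.commute mult.left_commute mult_left_mono less_imp_le mult_pos_pos)
    have t3: "Hf Q h * Wf Q q1 * Vf Q (q2 - 1) \<le> P" unfolding P_def using a hp
      by (metis mult.commute mult.left_commute mult_left_mono less_imp_le mult_pos_pos)
    have "g Q \<le> 3 * P - ?L * P"
      unfolding g_def P_def[symmetric] using t1 t2 t3 by linarith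
    also have "\<dots> = (3 - ?L) * P" by (simp add: algebra_simps)
    also have "\<dots> < 0" using L3 hp unfolding P_def by (intro mult_neg_pos) auto
    finally show ?thesis .
  qed
  have cL: "continuous_on {q0..Q} Lf" unfolding Lf_def using q0 by (intro continuous_intros) auto
  have cH: "continuous_on {q0..Q} (\<lambda>q. Hf q k)" for k
    unfolding Hf_def using gs_cont[of "{q0..Q}" Lf "\<lambda>q. 1" Lf] cL by auto
  have cW: "continuous_on {q0..Q} (\<lambda>q. Wf q k)" for k
  proof -
    have "continuous_on {q0..Q} (\<lambda>q. (Lf q)\<^sup>2 - 1)" "continuous_on {q0..Q} (\<lambda>q. Lf q * ((Lf q)\<^sup>2 - 1) - r1 * Lf q)"
      using cL by (auto intro!: continuous_intros)
    then show ?thesis unfolding Wf_def using gs_cont[of "{q0..Q}" Lf "\<lambda>q. (Lf q)\<^sup>2 - 1" "\<lambda>q. Lf q * ((Lf q)\<^sup>2 - 1) - r1 * Lf q"] cL by auto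
  qed
  have cV: "continuous_on {q0..Q} (\<lambda>q. Vf q k)" for k
  proof -
    have "continuous_on {q0..Q} (\<lambda>q. (Lf q)\<^sup>2 - 1)" "continuous_on {q0..Q} (\<lambda>q. Lf q * ((Lf q)\<^sup>2 - 1) - r2 * Lf q)"
      using cL by (auto intro!: continuous_intros)
    then show ?thesis unfolding Vf_def using gs_cont[of "{q0..Q}" Lf "\<lambda>q. (Lf q)\<^sup>2 - 1" "\<lambda>q. Lf q * ((Lf q)\<^sup>2 - 1) - r2 * Lf q"] cL by auto
  qed
  have cg: "continuous_on {q0..Q} g" unfolding g_def
    by (intro continuous_intros cH cW cV cL)
  obtain q where q: "q0 \<le> q" "q \<le> Q" "g q = 0"
    using IVT2'[of g Q 0 q0, OF _ _ _ cg] g0 gQ q0Q by auto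
  have "q \<noteq> q0" using q g0 by auto
  then have "q0 < q" using q by simp
  moreover have "Wf q q1 * Vf q q2 \<noteq> 0" using Wpos[OF q(1)] Vpos[OF q(1)] by (metis mult_pos_pos less_irrefl)
  ultimately show ?thesis using q by blast
qed



lemma R_strict: fixes s t :: real assumes "0 \<le> s" "s < t"
  shows "s + 1 / (s + 1) < t + 1 / (t + 1)"
proof -
  have "1 / (s + 1) - 1 / (t + 1) = (t - s) / ((s + 1) * (t + 1))" using assms by (simp add: field_simps)
  also have "\<dots> < (t - s) / 1"
  proof (rule divide_strict_left_mono)
    have "s * t \<ge> 0" using assms by simp
    moreover have "(s + 1) * (t + 1) = 1 + s + t + s * t" by (simp add: algebra_simps)
    ultimately show "1 < (s + 1) * (t + 1)" using assms by linarith
  qed (use assms in auto)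
  finally show ?thesis by simp
qed

lemma analytic:
  fixes r1 r2 :: nat and lam q theta a2 rlo rhi :: real and beta :: "real \<Rightarrow> real"
  assumes r: "2 \<le> r1" "r1 < r2" and q: "q > 1" "lam = q + 1 / q" and R: "real r2 < q\<^sup>2 + 1 / (q\<^sup>2 + 1)"
  defines "theta \<equiv> (- lam - sqrt (lam\<^sup>2 - 4)) / 2"
    and "a2 \<equiv> - lam + 1 / lam"
    and "beta \<equiv> (\<lambda>r. (r - a2 * theta) / (a2 * theta - r * theta\<^sup>2))"
    and "rlo \<equiv> a2 / theta"
    and "rhi \<equiv> a2 * theta"
  shows
    "(\<forall>r::real. r \<ge> 2 \<longrightarrow> (\<forall>j\<ge>1. (\<forall>i. 1 \<le> i \<and> i < j \<longrightarrow> zseq lam a2 r i \<noteq> 0) \<longrightarrow>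
        zseq lam a2 r j = theta + (inverse theta - theta) / (beta r * (theta\<^sup>2) ^ j + 1)))
   \<and> continuous_on ({2<..} - {rlo}) beta
   \<and> {r \<in> {2<..} - {rlo}. beta r = 0} = {rhi}
   \<and> (\<forall>r \<in> {rlo<..<rhi}. beta r > 0)
   \<and> (\<forall>r \<in> {real r1, real r2}.
        (\<forall>j\<ge>1. zseq lam a2 r j < 0)
      \<and> (\<forall>j\<ge>1. zseq lam a2 r (Suc j) \<le> zseq lam a2 r j)
      \<and> (zseq lam a2 r \<longlonglongrightarrow> theta))"
proof -
  note F = L_facts[OF q]
  have qp: "q > 0" "1 / q > 0" using q by auto
  have "lam\<^sup>2 - 4 = (q - 1 / q)\<^sup>2" unfolding q(2) using qp by (simp add: power2_eq_square field_simps)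
  moreover have "q - 1 / q \<ge> 0"
  proof -
    have "1 / q < 1" using q by simp
    then show ?thesis using q by linarith
  qed
  ultimately have sq: "sqrt (lam\<^sup>2 - 4) = q - 1 / q" by simp
  have th: "theta = - q" unfolding theta_def sq using q(2) by simp
  have t1: "theta < -1" using th q by simp
  have tlam: "lam = - (theta + 1 / theta)" using th q by simp
  have t2: "theta\<^sup>2 > 1" using sq_gt1[OF t1] .
  have t0: "theta \<noteq> 0" using t1 by simp
  have tsq0: "0 < theta\<^sup>2" using t2 by linarith
  have lampos: "lam > 1" using F by simp
  have a2ne: "a2 \<noteq> 0"
  proof -
    have "1 / lam < 1" using lampos by simp
    then show ?thesis unfolding a2_def using lampos by linarith
  qed
  have rhiR: "rhi = q\<^sup>2 + 1 / (q\<^sup>2 + 1)"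
  proof -
    have "rhi = q * (lam\<^sup>2 - 1) / lam" unfolding rhi_def a2_def th using lampos
      by (simp add: field_simps power2_eq_square)
    then show ?thesis using Rq[OF qp(1)] q by simp
  qed
  have rhi_gt: "rhi > real r2" using R rhiR by simp
  have rlo_lt: "rlo < 2"
  proof -
    have "rlo = (lam - 1 / lam) / q" unfolding rlo_def a2_def th using qp by (simp add: field_simps)
    also have "\<dots> < lam / q" using qp lampos by (intro divide_strict_right_mono) auto
    also have "\<dots> < 2" using F qp by (simp add: divide_less_eq)
    finally show ?thesis .
  qed
  have den: "a2 * theta - r * theta\<^sup>2 = theta\<^sup>2 * (rlo - r)" for r
    unfolding rlo_def using t0 by (simp add: field_simps power2_eq_square)
  have den0: "a2 * theta - r * theta\<^sup>2 \<noteq> 0" if "r \<noteq> rlo" for r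
    unfolding den using that t0 by simp
  have betaf: "beta r = (r - rhi) / (theta\<^sup>2 * (rlo - r))" for r
    unfolding beta_def den rhi_def ..
  have A: "\<forall>r::real. r \<ge> 2 \<longrightarrow> (\<forall>j\<ge>1. (\<forall>i. 1 \<le> i \<and> i < j \<longrightarrow> zseq lam a2 r i \<noteq> 0) \<longrightarrow>
        zseq lam a2 r j = theta + (inverse theta - theta) / (beta r * (theta\<^sup>2) ^ j + 1))"
  proof (intro allI impI)
    fix r :: real and j :: nat assume r2: "r \<ge> 2" and j: "j \<ge> 1"
      and nz: "\<forall>i. 1 \<le> i \<and> i < j \<longrightarrow> zseq lam a2 r i \<noteq> 0"
    have "r \<noteq> rlo" using r2 rlo_lt by simp
    from zformula[OF t1 tlam a2ne den0[OF this] j nz]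
    show "zseq lam a2 r j = theta + (inverse theta - theta) / (beta r * (theta\<^sup>2) ^ j + 1)"
      unfolding beta_def by simp
  qed
  have B1: "continuous_on ({2<..} - {rlo}) beta"
    unfolding beta_def using den0 by (auto intro!: continuous_intros)
  have B2: "{r \<in> {2<..} - {rlo}. beta r = 0} = {rhi}"
  proof -
    have "rhi > 2" using rhi_gt r by linarith
    moreover have "rhi \<noteq> rlo" using rhi_gt rlo_lt r by linarith
    moreover have "beta r = 0 \<longleftrightarrow> r = rhi" if "r \<noteq> rlo" for r
      unfolding betaf using that t0 by simp
    ultimately show ?thesis by auto
  qed
  have B3: "\<forall>r \<in> {rlo<..<rhi}. beta r > 0"
  proof
    fix r assume "r \<in> {rlo<..<rhi}"
    then have "r - rhi < 0" "theta\<^sup>2 * (rlo - r) < 0" using t2 by (auto intro!: mult_pos_neg)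
    then show "beta r > 0" unfolding betaf by (simp add: divide_neg_neg)
  qed
  have C: "(\<forall>j\<ge>1. zseq lam a2 r j < 0) \<and> (\<forall>j\<ge>1. zseq lam a2 r (Suc j) \<le> zseq lam a2 r j)
      \<and> (zseq lam a2 r \<longlonglongrightarrow> theta)" if rr: "r \<in> {real r1, real r2}" for r
  proof -
    have rge: "r \<ge> 2" "r < rhi" using rr r rhi_gt by auto
    have bpos: "beta r > 0" using B3 rge rlo_lt by auto
    define c where "c = inverse theta - theta"
    have cpos: "c > 0" unfolding c_def using t1 t2 by (simp add: inverse_eq_divide less_divide_eq power2_eq_square)
    define D where "D = (\<lambda>j::nat. beta r * (theta\<^sup>2) ^ j + 1)"
    have D1: "D j > 1" if "j \<ge> 1" for j
    proof -
      have "(theta\<^sup>2) ^ j > 0" by (rule zero_less_power[OF tsq0])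
      then have "beta r * (theta\<^sup>2) ^ j > 0" by (rule mult_pos_pos[OF bpos])
      then show ?thesis unfolding D_def by simp
    qed
    have Dmono: "D j \<le> D (Suc j)" for j
    proof -
      have "(theta\<^sup>2) ^ j \<le> (theta\<^sup>2) ^ Suc j" using t2 by (intro power_increasing) auto
      then show ?thesis unfolding D_def using bpos by (simp add: mult_left_mono)
    qed
    have form: "zseq lam a2 r j = theta + c / D j" if "j \<ge> 1" for j
    proof -
      have "zseq lam a2 r j = theta + c / D j \<and> zseq lam a2 r j < 0" using that
      proof (induction j rule: nat_less_induct)
        case (1 n)
        have nz: "\<forall>i. 1 \<le> i \<and> i < n \<longrightarrow> zseq lam a2 r i \<noteq> 0" using 1 by auto
        have eq: "zseq lam a2 r n = theta + c / D n" using A rge 1(2) nz unfolding c_def D_def by auto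
        have "c / D n < c / 1" using D1[OF 1(2)] cpos by (intro divide_strict_left_mono) auto
        then have "zseq lam a2 r n < theta + c" using eq by simp
        also have "theta + c = inverse theta" unfolding c_def by simp
        also have "\<dots> < 0" using t1 by simp
        finally show ?case using eq by simp
      qed
      then show ?thesis by simp
    qed
    have neg: "\<forall>j\<ge>1. zseq lam a2 r j < 0"
    proof (intro allI impI)
      fix j :: nat assume j: "j \<ge> 1"
      have "c / D j < c / 1" using D1[OF j] cpos by (intro divide_strict_left_mono) auto
      then have "zseq lam a2 r j < theta + c" using form[OF j] by simp
      moreover have "theta + c = inverse theta" unfolding c_def by simp
      moreover have "inverse theta < 0" using t1 by simp
      ultimately show "zseq lam a2 r j < 0" by linarith
    qed
    have dec: "\<forall>j\<ge>1. zseq lam a2 r (Suc j) \<le> zseq lam a2 r j"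
    proof (intro allI impI)
      fix j :: nat assume j: "j \<ge> 1"
      have "c / D (Suc j) \<le> c / D j" using Dmono[of j] D1[OF j] cpos by (intro divide_left_mono) auto
      then show "zseq lam a2 r (Suc j) \<le> zseq lam a2 r j" using form[OF j] form[of "Suc j"] j by simp
    qed
    have lim0: "(\<lambda>j. c / D j) \<longlonglongrightarrow> 0"
    proof (rule tendsto_sandwich[of "\<lambda>_. 0" _ _ "\<lambda>j. (c / beta r) * (1 / theta\<^sup>2) ^ j"])
      have Dpos: "D j > 0" for j
      proof -
        have "(theta\<^sup>2) ^ j > 0" by (rule zero_less_power[OF tsq0])
        then have "beta r * (theta\<^sup>2) ^ j > 0" by (rule mult_pos_pos[OF bpos])
        then show ?thesis unfolding D_def by simp
      qed
      show "\<forall>\<^sub>F j in sequentially. 0 \<le> c / D j"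
        using cpos Dpos by (intro always_eventually allI divide_nonneg_pos) (auto simp: less_imp_le)
      show "\<forall>\<^sub>F j in sequentially. c / D j \<le> (c / beta r) * (1 / theta\<^sup>2) ^ j"
      proof (rule always_eventually, rule allI)
        fix j
        have p: "(theta\<^sup>2) ^ j > 0" by (rule zero_less_power[OF tsq0])
        have bp: "beta r * (theta\<^sup>2) ^ j > 0" using p by (rule mult_pos_pos[OF bpos])
        have "c / D j \<le> c / (beta r * (theta\<^sup>2) ^ j)" unfolding D_def using cpos bp
          by (intro divide_left_mono) (auto intro!: mult_pos_pos)
        also have "\<dots> = (c / beta r) * (1 / theta\<^sup>2) ^ j" by (simp add: power_one_over)
        finally show "c / D j \<le> (c / beta r) * (1 / theta\<^sup>2) ^ j" .
      qed
      show "(\<lambda>_. 0::real) \<longlonglongrightarrow> 0" by simp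
      have "(\<lambda>j. (1 / theta\<^sup>2) ^ j) \<longlonglongrightarrow> 0" using t2 tsq0 by (intro LIMSEQ_power_zero) (simp add: divide_less_eq)
      then show "(\<lambda>j. (c / beta r) * (1 / theta\<^sup>2) ^ j) \<longlonglongrightarrow> 0"
        by (rule tendsto_mult_right_zero)
    qed
    have "(\<lambda>j. theta + c / D j) \<longlonglongrightarrow> theta + 0" by (intro tendsto_intros lim0)
    then have "(\<lambda>j. theta + c / D j) \<longlonglongrightarrow> theta" by simp
    moreover have "\<forall>\<^sub>F j in sequentially. theta + c / D j = zseq lam a2 r j"
      using form by (auto simp: eventually_sequentially intro!: exI[of _ 1])
    ultimately have "zseq lam a2 r \<longlonglongrightarrow> theta" by (rule Lim_transform_eventually)
    then show ?thesis using neg dec by blast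
  qed
  show ?thesis using A B1 B2 B3 C by blast
qed



lemma q0_exists:
  fixes r2 :: real assumes "3 \<le> r2"
  shows "\<exists>q0. 1 < q0 \<and> q0\<^sup>2 + 1 / (q0\<^sup>2 + 1) = r2"
proof -
  let ?f = "\<lambda>s::real. s + 1 / (s + 1)"
  have c: "continuous_on {1..r2} ?f" by (intro continuous_intros) auto
  have "?f 1 \<le> r2" using assms by simp
  moreover have "r2 \<le> ?f r2" using assms by simp
  ultimately obtain s where s: "1 \<le> s" "s \<le> r2" "?f s = r2"
    using IVT'[of ?f 1 r2 r2, OF _ _ _ c] assms by auto
  have "s \<noteq> 1" using s assms by auto
  then have s1: "s > 1" using s by simp
  define q0 where "q0 = sqrt s"
  have "q0\<^sup>2 = s" unfolding q0_def using s1 by simp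
  moreover have "q0 > 1" unfolding q0_def using s1 by simp
  ultimately show ?thesis using s by auto
qed

lemma finite_eigs: fixes A :: "real mat" assumes "A \<in> carrier_mat n n"
  shows "finite {x. eigenvalue A x}"
proof -
  have "{x. eigenvalue A x} = {x. poly (char_poly A) x = 0}"
    using eigenvalue_root_char_poly[OF assms] by auto
  moreover have "char_poly A \<noteq> 0" using degree_monic_char_poly[OF assms] by auto
  ultimately show ?thesis using poly_roots_finite by simp
qed

lemma lam_lower:
  fixes r1 r2 h q1 q2 :: nat
  assumes "2 \<le> r1" and "r1 < r2" and "2 \<le> h" and "2 \<le> q1" and "2 \<le> q2"
  shows "\<exists>q. q > 1 \<and> largest_eigenvalue (tree_adj r1 r2 h q1 q2) = q + 1 / q \<and> real r2 < q\<^sup>2 + 1 / (q\<^sup>2 + 1)"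
proof -
  have r23: "3 \<le> real r2" using assms by simp
  obtain q0 where q0: "1 < q0" "q0\<^sup>2 + 1 / (q0\<^sup>2 + 1) = real r2" using q0_exists[OF r23] by blast
  define Lf where "Lf = (\<lambda>q::real. q + 1 / q)"
  define Hf where "Hf = (\<lambda>q. gs (Lf q) 1 (Lf q))"
  define Wf where "Wf = (\<lambda>q. gs (Lf q) ((Lf q)\<^sup>2 - 1) (Lf q * ((Lf q)\<^sup>2 - 1) - real r1 * Lf q))"
  define Vf where "Vf = (\<lambda>q. gs (Lf q) ((Lf q)\<^sup>2 - 1) (Lf q * ((Lf q)\<^sup>2 - 1) - real r2 * Lf q))"
  obtain qs where qs: "q0 < qs"
    "Wf qs q1 * Vf qs q2 * Hf qs (h - 1) + Hf qs h * Vf qs q2 * Wf qs (q1 - 1)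
       + Hf qs h * Wf qs q1 * Vf qs (q2 - 1) - Lf qs * (Hf qs h * Wf qs q1 * Vf qs q2) = 0"
    "Wf qs q1 * Vf qs q2 \<noteq> 0"
    using exists_q[of "real r1" "real r2" q0 h q1 q2] q0 assms
    unfolding Lf_def Hf_def Wf_def Vf_def by auto
  let ?l = "Lf qs"
  have ev: "eigenvalue (tree_adj r1 r2 h q1 q2) ?l"
  proof (rule tree_eigen[where h = h and ?q1.0 = q1 and ?q2.0 = q2 and l = ?l and H = "Hf qs" and W = "Wf qs" and V = "Vf qs" and ?r1.0 = r1 and ?r2.0 = r2])
    show "2 \<le> h" "2 \<le> q1" "2 \<le> q2" using assms by auto
    show "\<And>k. Hf qs (k + 2) = ?l * Hf qs (k + 1) - Hf qs k" unfolding Hf_def by (rule gs_rec)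
    show "\<And>k. Wf qs (k + 2) = ?l * Wf qs (k + 1) - Wf qs k" unfolding Wf_def by (rule gs_rec)
    show "\<And>k. Vf qs (k + 2) = ?l * Vf qs (k + 1) - Vf qs k" unfolding Vf_def by (rule gs_rec)
    show "Hf qs 0 = 1" "Hf qs 1 = ?l" unfolding Hf_def by simp_all
    show "Wf qs 0 = ?l\<^sup>2 - 1" "Wf qs 1 = ?l * Wf qs 0 - real r1 * ?l" unfolding Wf_def by simp_all
    show "Vf qs 0 = ?l\<^sup>2 - 1" "Vf qs 1 = ?l * Vf qs 0 - real r2 * ?l" unfolding Vf_def by simp_all
    show "Wf qs q1 * Vf qs q2 * Hf qs (h - 1) + Hf qs h * Vf qs q2 * Wf qs (q1 - 1) + Hf qs h * Wf qs q1 * Vf qs (q2 - 1) =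
      ?l * (Hf qs h * Wf qs q1 * Vf qs q2)" using qs(2) by simp
    show "Wf qs q1 * Vf qs q2 \<noteq> 0" by (rule qs(3))
  qed
  define lam where "lam = largest_eigenvalue (tree_adj r1 r2 h q1 q2)"
  have A: "tree_adj r1 r2 h q1 q2 \<in> carrier_mat (tree_order r1 r2 h q1 q2) (tree_order r1 r2 h q1 q2)"
    unfolding tree_adj_def by simp
  have lge: "?l \<le> lam" unfolding lam_def largest_eigenvalue_def
    using finite_eigs[OF A] ev by (intro Max_ge) auto
  have qs1: "qs > 1" using qs q0 by simp
  note FF = L_facts[OF qs1, of ?l]
  have FF: "?l \<ge> 2" using L_facts[OF qs1] unfolding Lf_def by auto
  have sqs: "sqrt (?l\<^sup>2 - 4) = qs - 1 / qs"
  proof -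
    have "?l\<^sup>2 - 4 = (qs - 1 / qs)\<^sup>2" unfolding Lf_def using qs1 by (simp add: power2_eq_square field_simps)
    moreover have "qs - 1 / qs \<ge> 0"
    proof -
      have "1 / qs < 1" using qs1 by simp
      then show ?thesis using qs1 by linarith
    qed
    ultimately show ?thesis by simp
  qed
  define qL where "qL = (lam + sqrt (lam\<^sup>2 - 4)) / 2"
  have lam2: "lam \<ge> 2" using lge FF by linarith
  have "?l\<^sup>2 \<le> lam\<^sup>2" using lge FF by (intro power_mono) auto
  then have "sqrt (?l\<^sup>2 - 4) \<le> sqrt (lam\<^sup>2 - 4)" by simp
  then have "qs \<le> qL" unfolding qL_def using sqs lge unfolding Lf_def by simp
  then have qLq0: "q0 < qL" using qs by simp
  have qL1: "qL > 1" using qLq0 q0 by simp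
  have lamq: "lam = qL + 1 / qL"
  proof -
    have l4: "lam\<^sup>2 - 4 \<ge> 0"
    proof -
      have "2 * 2 \<le> lam * lam" using lam2 by (intro mult_mono) auto
      then show ?thesis by (simp add: power2_eq_square)
    qed
    define sq where "sq = sqrt (lam\<^sup>2 - 4)"
    have sq2: "sq * sq = lam * lam - 4" unfolding sq_def using l4 by (simp add: power2_eq_square[symmetric])
    have "qL * (lam - qL) = (lam * lam - sq * sq) / 4" unfolding qL_def sq_def[symmetric] by (simp add: field_simps)
    also have "\<dots> = 1" using sq2 by simp
    finally have "qL * (lam - qL) = 1" .
    then show ?thesis using qL1 by (simp add: field_simps)
  qed
  have "real r2 < qL\<^sup>2 + 1 / (qL\<^sup>2 + 1)"
  proof -
    have "q0\<^sup>2 < qL\<^sup>2" using qLq0 q0 by (intro power_strict_mono) auto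
    then have "q0\<^sup>2 + 1 / (q0\<^sup>2 + 1) < qL\<^sup>2 + 1 / (qL\<^sup>2 + 1)" by (intro R_strict) auto
    then show ?thesis using q0 by simp
  qed
  then show ?thesis using qL1 lamq unfolding lam_def by blast
qed

theorem theorem3p2:
  fixes r1 r2 h q1 q2 :: nat and lam theta a2 rlo rhi :: real and beta :: "real \<Rightarrow> real"
  assumes "2 \<le> r1" and "r1 < r2"
    and "2 \<le> h" and "2 \<le> q1" and "2 \<le> q2"
  defines "lam \<equiv> largest_eigenvalue (tree_adj r1 r2 h q1 q2)"
    and "theta \<equiv> (- lam - sqrt (lam\<^sup>2 - 4)) / 2"
    and "a2 \<equiv> - lam + 1 / lam"
    and "beta \<equiv> (\<lambda>r. (r - a2 * theta) / (a2 * theta - r * theta\<^sup>2))"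
    and "rlo \<equiv> a2 / theta"
    and "rhi \<equiv> a2 * theta"
  shows
    "(\<forall>r::real. r \<ge> 2 \<longrightarrow> (\<forall>j\<ge>1. (\<forall>i. 1 \<le> i \<and> i < j \<longrightarrow> zseq lam a2 r i \<noteq> 0) \<longrightarrow>
        zseq lam a2 r j = theta + (inverse theta - theta) / (beta r * (theta\<^sup>2) ^ j + 1)))
   \<and> continuous_on ({2<..} - {rlo}) beta
   \<and> {r \<in> {2<..} - {rlo}. beta r = 0} = {rhi}
   \<and> (\<forall>r \<in> {rlo<..<rhi}. beta r > 0)
   \<and> (\<forall>r \<in> {real r1, real r2}.
        (\<forall>j\<ge>1. zseq lam a2 r j < 0)
      \<and> (\<forall>j\<ge>1. zseq lam a2 r (Suc j) \<le> zseq lam a2 r j)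
      \<and> (zseq lam a2 r \<longlonglongrightarrow> theta))"
proof -
  obtain q where q: "q > 1" "lam = q + 1 / q" "real r2 < q\<^sup>2 + 1 / (q\<^sup>2 + 1)"
    using lam_lower[OF assms(1-5)] unfolding lam_def by blast
  show ?thesis
    unfolding theta_def a2_def beta_def rlo_def rhi_def
    by (rule analytic[OF assms(1,2) q])
qed

end
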